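(* Let $\mathcal{T}$ be a planar triangulation, let $m\in\mathbb{Z}_{\ge 0}$ and $r\in\mathbb{Z}_{\ge -1}$, and let $\mathbf{r}$ be a smoothness distribution with $\mathbf{r}(\tau)\in\{r,-1\}$ for every interior edge $\tau$. Assume $\mathcal{Q}^{\mathbf{r}}$ is lower-acyclic. Let $\tau$ be an interior edge with end-points $\gamma$ and $\gamma'$ such that $\mathbf{r}(\tau)=r$. If $\tau'$ is an interior edge incident on $\gamma$ with $\mathbf{r}(\tau')=-1$, then $\mathcal{Q}^{\mathbf{s}}$ is also lower-acyclic, where $\mathbf{s}(\tau'')=\mathbf{r}(\tau'')$ for every interior edge $\tau''\neq\tau$ and $\mathbf{s}(\tau)=-1$.
   Context: $\mathcal{T}$ is a finite planar mesh: a subdivision of a closed polygonal region $\Omega\subset\mathbb{R}^2$ (possibly not simply connected) into closed polygonal faces (here triangles) meeting along straight edges and vertices. $\mathcal{T}_2,\mathcal{T}_1,\mathcal{T}_0$ denote the faces, edges and vertices; an edge or vertex is interior if it is not contained in $\partial\Omega$, and $\mathcal{T}^\circ_1,\mathcal{T}^\circ_0$ denote the interior edges and interior vertices. ${\mathcal{P}}_m$ is the space of real bivariate polynomials of total degree at most $m$; for polynomials $f_1,\dots,f_k$, $\langle f_1,\dots,f_k\rangle$ denotes the subspace of ${\mathcal{P}}_m$ consisting of all polynomial combinations $\sum g_if_i$ lying in ${\mathcal{P}}_m$. A smoothness distribution is a map $\mathbf{r}:\mathcal{T}^\circ_1\to\mathbb{Z}_{\ge -1}$. For $\tau\in\mathcal{T}^\circ_1$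 let $\ell_\tau$ be a nonzero affine-linear polynomial vanishing on $\tau$ and put $\mathfrak{J}^{\mathbf r}_\tau=\langle \ell_\tau^{\mathbf r(\tau)+1}\rangle$ (which is all of ${\mathcal{P}}_m$ when $\mathbf r(\tau)=-1$); for $\gamma\in\mathcal{T}^\circ_0$ put $\mathfrak{J}^{\mathbf r}_\gamma=\sum_{\tau\ni\gamma}\mathfrak{J}^{\mathbf r}_\tau$, the sum over interior edges containing $\gamma$. After fixing orientations of faces and edges, $\mathcal{C}$ is the chain complex $\bigoplus_{\sigma\in\mathcal{T}_2}{\mathcal{P}}_m\xrightarrow{\partial_2}\bigoplus_{\tau\in\mathcal{T}^\circ_1}{\mathcal{P}}_m\xrightarrow{\partial_1}\bigoplus_{\gamma\in\mathcal{T}^\circ_0}{\mathcal{P}}_m$ (in homological degrees $2,1,0$) whose maps are the cellular boundary maps of $\mathcal{T}$ relative to $\partial\Omega$ (incidence signs $\pm1$, boundary edges and vertices omitted). $\mathcal{I}^{\mathbf r}$ is the subcomplex $0\to\bigoplus_{\tau\in\mathcal{T}^\circ_1}\mathfrak{J}^{\mathbf r}_\tau\to\bigoplus_{\gamma\in\mathcal{T}^\circ_0}\mathfrak{J}^{\mathbf r}_\gamma$, and $\mathcal{Q}^{\mathbf r}=\mathcal{C}/\mathcal{I}^{\mathbf r}$. Then $H_2(\mathcal{Q}^{\mathbf r})$ is the spline space of piecewise polynomials in ${\mathcal{P}}_m$ on each face that are $C^{\mathbf r(\tau)}$ across each interior edge $\tau$. $\mathcal{Q}^{\mathbf r}$ is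 called lower-acyclic if $H_1(\mathcal{Q}^{\mathbf r})=H_0(\mathcal{Q}^{\mathbf r})=0$. *)

theory Defs
  imports "HOL-Analysis.Analysis"
begin

type_synonym pt = "real \<times> real"

definition lexless :: "pt \<Rightarrow> pt \<Rightarrow> bool" where
  "lexless a b \<longleftrightarrow> fst a < fst b \<or> (fst a = fst b \<and> snd a < snd b)"

definition cross :: "pt \<Rightarrow> pt \<Rightarrow> real" where
  "cross u v = fst u * snd v - snd u * fst v"

text \<open>A mesh is given by its set of (closed, triangular) faces, each face being
  represented by its set of three vertices; the face itself is the convex hull.\<close>

definition region :: "pt set set \<Rightarrow> pt set" where
  "region F = (\<Union>\<sigma>\<in>F. convex hull \<sigma>)"

definition is_triangulation :: "pt set set \<Rightarrow> bool" where
  "is_triangulation F \<longleftrightarrow> finite F \<and> F \<noteq> {} \<and>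
     (\<forall>\<sigma>\<in>F. card \<sigma> = 3 \<and> \<not> collinear \<sigma>) \<and>
     (\<forall>\<sigma>\<in>F. \<forall>\<sigma>'\<in>F. convex hull \<sigma> \<inter> convex hull \<sigma>' = convex hull (\<sigma> \<inter> \<sigma>')) \<and>
     connected (region F)"

definition edges :: "pt set set \<Rightarrow> pt set set" where
  "edges F = {\<tau>. \<exists>\<sigma>\<in>F. \<tau> \<subseteq> \<sigma> \<and> card \<tau> = 2}"

definition vertices :: "pt set set \<Rightarrow> pt set" where
  "vertices F = \<Union>F"

definition int_edges :: "pt set set \<Rightarrow> pt set set" where
  "int_edges F = {\<tau>\<in>edges F. \<not> (convex hull \<tau> \<subseteq> frontier (region F))}"

definition int_vertices :: "pt set set \<Rightarrow> pt set" where
  "int_vertices F = {\<gamma>\<in>vertices F. \<gamma> \<notin> frontier (region F)}"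

definition poly_deg :: "nat \<Rightarrow> (pt \<Rightarrow> real) set" where
  "poly_deg m = {p. \<exists>c::nat \<Rightarrow> nat \<Rightarrow> real.
      p = (\<lambda>z. \<Sum>i\<le>m. \<Sum>j\<le>m - i. c i j * fst z ^ i * snd z ^ j)}"

definition polys :: "(pt \<Rightarrow> real) set" where
  "polys = (\<Union>m. poly_deg m)"

text \<open>A fixed nonzero affine form vanishing on the edge \<open>\<tau> = {a,b}\<close>.\<close>
definition ell :: "pt set \<Rightarrow> pt \<Rightarrow> real" where
  "ell \<tau> z = (\<Sum>a\<in>\<tau>. \<Sum>b\<in>\<tau>. if lexless a b then cross (b - a) (z - a) else 0)"

definition J_edge :: "nat \<Rightarrow> (pt set \<Rightarrow> int) \<Rightarrow> pt set \<Rightarrow> (pt \<Rightarrow> real) set" where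
  "J_edge m rr \<tau> = {p \<in> poly_deg m. \<exists>g\<in>polys. \<forall>z. p z = g z * ell \<tau> z ^ nat (rr \<tau> + 1)}"

definition J_vert :: "pt set set \<Rightarrow> nat \<Rightarrow> (pt set \<Rightarrow> int) \<Rightarrow> pt \<Rightarrow> (pt \<Rightarrow> real) set" where
  "J_vert F m rr \<gamma> = {q. \<exists>p. (\<forall>\<tau>\<in>int_edges F. \<gamma> \<in> \<tau> \<longrightarrow> p \<tau> \<in> J_edge m rr \<tau>) \<and>
      q = (\<lambda>z. \<Sum>\<tau>\<in>{\<tau>\<in>int_edges F. \<gamma> \<in> \<tau>}. p \<tau> z)}"

text \<open>Orientations: faces counterclockwise, edges from the lexicographically
  smaller to the larger end-point.\<close>

definition inc :: "pt set \<Rightarrow> pt set \<Rightarrow> real" where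
  "inc \<sigma> \<tau> = (\<Sum>a\<in>\<tau>. \<Sum>b\<in>\<tau>. \<Sum>c\<in>\<sigma> - \<tau>.
      if lexless a b then sgn (cross (b - a) (c - a)) else 0)"

definition vinc :: "pt set \<Rightarrow> pt \<Rightarrow> real" where
  "vinc \<tau> \<gamma> = (\<Sum>\<delta>\<in>\<tau> - {\<gamma>}. if lexless \<delta> \<gamma> then 1 else -1)"

definition bd2 :: "pt set set \<Rightarrow> (pt set \<Rightarrow> pt \<Rightarrow> real) \<Rightarrow> pt set \<Rightarrow> pt \<Rightarrow> real" where
  "bd2 F u \<tau> = (\<lambda>z. \<Sum>\<sigma>\<in>{\<sigma>\<in>F. \<tau> \<subseteq> \<sigma>}. inc \<sigma> \<tau> * u \<sigma> z)"

definition bd1 :: "pt set set \<Rightarrow> (pt set \<Rightarrow> pt \<Rightarrow> real) \<Rightarrow> pt \<Rightarrow> pt \<Rightarrow> real" where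
  "bd1 F w \<gamma> = (\<lambda>z. \<Sum>\<tau>\<in>{\<tau>\<in>int_edges F. \<gamma> \<in> \<tau>}. vinc \<tau> \<gamma> * w \<tau> z)"

text \<open>\<open>H_1(Q) = 0\<close>: every chain in \<open>C_1\<close> whose boundary lies in \<open>I_0\<close> is a boundary
  modulo \<open>I_1\<close>.  \<open>H_0(Q) = 0\<close>: \<open>C_0 = \<partial>_1 C_1 + I_0\<close>.\<close>

definition H1_vanishes :: "pt set set \<Rightarrow> nat \<Rightarrow> (pt set \<Rightarrow> int) \<Rightarrow> bool" where
  "H1_vanishes F m rr \<longleftrightarrow>
    (\<forall>w. (\<forall>\<tau>\<in>int_edges F. w \<tau> \<in> poly_deg m) \<and>
         (\<forall>\<gamma>\<in>int_vertices F. bd1 F w \<gamma> \<in> J_vert F m rr \<gamma>) \<longrightarrow>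
       (\<exists>u b. (\<forall>\<sigma>\<in>F. u \<sigma> \<in> poly_deg m) \<and>
              (\<forall>\<tau>\<in>int_edges F. b \<tau> \<in> J_edge m rr \<tau> \<and>
                   w \<tau> = (\<lambda>z. bd2 F u \<tau> z + b \<tau> z))))"

definition H0_vanishes :: "pt set set \<Rightarrow> nat \<Rightarrow> (pt set \<Rightarrow> int) \<Rightarrow> bool" where
  "H0_vanishes F m rr \<longleftrightarrow>
    (\<forall>d. (\<forall>\<gamma>\<in>int_vertices F. d \<gamma> \<in> poly_deg m) \<longrightarrow>
       (\<exists>w e. (\<forall>\<tau>\<in>int_edges F. w \<tau> \<in> poly_deg m) \<and>
              (\<forall>\<gamma>\<in>int_vertices F. e \<gamma> \<in> J_vert F m rr \<gamma> \<and>
                   d \<gamma> = (\<lambda>z. bd1 F w \<gamma> z + e \<gamma> z))))"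

definition lower_acyclic :: "pt set set \<Rightarrow> nat \<Rightarrow> (pt set \<Rightarrow> int) \<Rightarrow> bool" where
  "lower_acyclic F m rr \<longleftrightarrow> H1_vanishes F m rr \<and> H0_vanishes F m rr"

end

theory Submission
  imports Defs
begin

lemma poly_lin:
  assumes "p \<in> poly_deg m" "q \<in> poly_deg m"
  shows "(\<lambda>z. a * p z + b * q z) \<in> poly_deg m"
proof -
  obtain c1 where c1: "p = (\<lambda>z. \<Sum>i\<le>m. \<Sum>j\<le>m - i. c1 i j * fst z ^ i * snd z ^ j)"
    using assms(1) unfolding poly_deg_def by blast
  obtain c2 where c2: "q = (\<lambda>z. \<Sum>i\<le>m. \<Sum>j\<le>m - i. c2 i j * fst z ^ i * snd z ^ j)"
    using assms(2) unfolding poly_deg_def by blast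
  show ?thesis unfolding poly_deg_def
    apply (rule CollectI, rule exI[of _ "\<lambda>i j. a * c1 i j + b * c2 i j"])
    by (auto simp: c1 c2 sum_distrib_left sum.distrib algebra_simps)
qed

lemma poly_zero: "(\<lambda>z. 0) \<in> poly_deg m"
  unfolding poly_deg_def by (rule CollectI, rule exI[of _ "\<lambda>i j. 0"]) simp

lemma poly_add: "p \<in> poly_deg m \<Longrightarrow> q \<in> poly_deg m \<Longrightarrow> (\<lambda>z. p z + q z) \<in> poly_deg m"
  using poly_lin[of p m q 1 1] by simp

lemma poly_diff: "p \<in> poly_deg m \<Longrightarrow> q \<in> poly_deg m \<Longrightarrow> (\<lambda>z. p z - q z) \<in> poly_deg m"
  using poly_lin[of p m q 1 "-1"] by simp

lemma poly_smult: "p \<in> poly_deg m \<Longrightarrow> (\<lambda>z. a * p z) \<in> poly_deg m"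
  using poly_lin[of p m p a 0] by simp

lemma poly_sum:
  assumes "\<forall>i\<in>A. f i \<in> poly_deg m"
  shows "(\<lambda>z. \<Sum>i\<in>A. f i z) \<in> poly_deg m"
proof (cases "finite A")
  case True
  then show ?thesis using assms
  proof (induction A rule: finite_induct)
    case empty then show ?case using poly_zero by simp
  next
    case (insert x A)
    then show ?case using poly_add[of "f x" m "\<lambda>z. \<Sum>i\<in>A. f i z"] by simp
  qed
next
  case False then show ?thesis using poly_zero by simp
qed

lemma J_edge_sub: "J_edge m rr t \<subseteq> poly_deg m"
  unfolding J_edge_def by blast

lemma J_edge_zero: "(\<lambda>z. 0) \<in> J_edge m rr t"
  unfolding J_edge_def polys_def using poly_zero by force

lemma J_edge_full: "rr t = -1 \<Longrightarrow> J_edge m rr t = poly_deg m"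
  unfolding J_edge_def polys_def by auto

lemma J_vert_sub: "J_vert F m rr x \<subseteq> poly_deg m"
proof
  fix q assume "q \<in> J_vert F m rr x"
  then obtain p where p: "\<forall>t\<in>int_edges F. x \<in> t \<longrightarrow> p t \<in> J_edge m rr t"
    and q: "q = (\<lambda>z. \<Sum>t\<in>{t\<in>int_edges F. x \<in> t}. p t z)"
    unfolding J_vert_def by blast
  have "\<forall>t\<in>{t\<in>int_edges F. x \<in> t}. p t \<in> poly_deg m" using p J_edge_sub by blast
  then show "q \<in> poly_deg m" unfolding q by (rule poly_sum)
qed

lemma fin_int_edges:
  assumes "is_triangulation F"
  shows "finite (int_edges F)"
proof -
  have "finite F" and c: "\<forall>\<sigma>\<in>F. card \<sigma> = 3" using assms unfolding is_triangulation_def by auto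
  have "\<And>M. M \<in> F \<Longrightarrow> finite M"
  proof -
    fix M assume "M \<in> F"
    then have "card M = 3" using c by blast
    then show "finite M" by (metis card.infinite zero_neq_numeral)
  qed
  then have "finite (\<Union>F)" using \<open>finite F\<close> by (rule finite_Union[rotated])
  moreover have "edges F \<subseteq> Pow (\<Union>F)" unfolding edges_def by auto
  ultimately have "finite (edges F)" by (meson finite_Pow_iff rev_finite_subset)
  then show ?thesis unfolding int_edges_def by auto
qed

lemma J_vert_full:
  assumes "finite (int_edges F)" "t \<in> int_edges F" "x \<in> t" "rr t = -1"
  shows "poly_deg m \<subseteq> J_vert F m rr x"
proof
  fix q assume q: "q \<in> poly_deg m"
  let ?p = "\<lambda>t' z. if t' = t then q z else 0"
  have fin: "finite {t'\<in>int_edges F. x \<in> t'}" using assms(1) by auto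
  have h1: "q = (\<lambda>z. \<Sum>t'\<in>{t'\<in>int_edges F. x \<in> t'}. ?p t' z)"
    using fin assms by (simp add: sum.delta)
  have h2: "\<forall>t'\<in>int_edges F. x \<in> t' \<longrightarrow> ?p t' \<in> J_edge m rr t'"
  proof (intro ballI impI)
    fix t' assume "t' \<in> int_edges F" "x \<in> t'"
    show "?p t' \<in> J_edge m rr t'"
    proof (cases "t' = t")
      case True then show ?thesis using J_edge_full[of rr t m] assms q by simp
    next
      case False then show ?thesis using J_edge_zero[of m rr t'] by simp
    qed
  qed
  show "q \<in> J_vert F m rr x" unfolding J_vert_def by (rule CollectI, rule exI[of _ ?p], rule conjI[OF h2 h1])
qed

lemma J_edge_mono: "J_edge m rr x \<subseteq> J_edge m (rr(t := -1)) x"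
proof (cases "x = t")
  case True
  then show ?thesis using J_edge_sub[of m rr x] J_edge_full[of "rr(t := -1)" t m] by simp
next
  case False
  then show ?thesis unfolding J_edge_def by simp
qed

lemma J_vert_mono: "J_vert F m rr x \<subseteq> J_vert F m (rr(t := -1)) x"
proof
  fix q assume "q \<in> J_vert F m rr x"
  then obtain p where p: "\<forall>t\<in>int_edges F. x \<in> t \<longrightarrow> p t \<in> J_edge m rr t"
    and q: "q = (\<lambda>z. \<Sum>t\<in>{t\<in>int_edges F. x \<in> t}. p t z)"
    unfolding J_vert_def by blast
  have h2: "\<forall>t'\<in>int_edges F. x \<in> t' \<longrightarrow> p t' \<in> J_edge m (rr(t := -1)) t'"
    using p J_edge_mono[of m rr _ t] by blast
  show "q \<in> J_vert F m (rr(t := -1)) x" unfolding J_vert_def by (rule CollectI, rule exI[of _ p], rule conjI[OF h2 q])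
qed

lemma J_vert_same:
  assumes "x \<notin> t"
  shows "J_vert F m (rr(t := -1)) x = J_vert F m rr x"
proof -
  have "\<And>t'. x \<in> t' \<Longrightarrow> J_edge m (rr(t := -1)) t' = J_edge m rr t'"
    using assms unfolding J_edge_def by auto
  then show ?thesis unfolding J_vert_def by (intro Collect_cong) (metis (no_types, lifting))
qed

lemma bd1_upd_other:
  assumes "x \<notin> t"
  shows "bd1 F (w(t := f)) x = bd1 F w x"
  unfolding bd1_def using assms by (intro ext sum.cong) auto

lemma bd1_upd_in:
  assumes "finite (int_edges F)" "t \<in> int_edges F" "x \<in> t"
  shows "bd1 F (w(t := (\<lambda>z. w t z - c * q z))) x = (\<lambda>z. bd1 F w x z - vinc t x * c * q z)"
proof (rule ext)
  fix z
  let ?S = "{t'\<in>int_edges F. x \<in> t'}"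
  have fin: "finite ?S" using assms(1) by auto
  have "bd1 F (w(t := (\<lambda>z. w t z - c * q z))) x z
      = (\<Sum>t'\<in>?S. vinc t' x * w t' z - (if t' = t then vinc t x * c * q z else 0))"
    unfolding bd1_def by (intro sum.cong) (auto simp: algebra_simps)
  also have "\<dots> = bd1 F w x z - vinc t x * c * q z"
    unfolding bd1_def using fin assms by (simp add: sum_subtractf sum.delta)
  finally show "bd1 F (w(t := (\<lambda>z. w t z - c * q z))) x z = bd1 F w x z - vinc t x * c * q z" .
qed

lemma bd1_poly:
  assumes "\<forall>t\<in>int_edges F. w t \<in> poly_deg m"
  shows "bd1 F w x \<in> poly_deg m"
  unfolding bd1_def using assms by (intro poly_sum) (auto intro: poly_smult)

theorem mainTheorem1:
  fixes F :: "pt set set" and m :: nat and r :: int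
    and rr :: "pt set \<Rightarrow> int" and \<tau> \<tau>' :: "pt set" and \<gamma> :: pt
  assumes "is_triangulation F"
    and "r \<ge> -1"
    and "\<forall>\<tau>''\<in>int_edges F. rr \<tau>'' \<in> {r, -1}"
    and "lower_acyclic F m rr"
    and "\<tau> \<in> int_edges F" and "\<gamma> \<in> \<tau>" and "rr \<tau> = r"
    and "\<tau>' \<in> int_edges F" and "\<gamma> \<in> \<tau>'" and "rr \<tau>' = -1"
  shows "lower_acyclic F m (rr(\<tau> := -1))"
proof -
  let ?s = "rr(\<tau> := -1)"
  have fin: "finite (int_edges F)" using fin_int_edges assms(1) .
  have H1: "H1_vanishes F m rr" and H0: "H0_vanishes F m rr"
    using assms(4) unfolding lower_acyclic_def by auto
  have "card \<tau> = 2" using assms(5) unfolding int_edges_def edges_def by auto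
  then obtain a b where ab: "\<tau> = {a, b}" "a \<noteq> b" by (meson card_2_iff)
  obtain g' where g': "\<tau> = {\<gamma>, g'}" "\<gamma> \<noteq> g'"
    using ab assms(6) by blast
  define c where "c = vinc \<tau> g'"
  have cc: "c * c = 1" unfolding c_def vinc_def using g' by (simp add: insert_Diff_if)
  have Jg: "poly_deg m \<subseteq> J_vert F m rr \<gamma>"
    using J_vert_full[of F \<tau>' \<gamma> rr m, OF fin assms(8,9,10)] .
  have Jsg: "J_vert F m ?s \<gamma> \<subseteq> poly_deg m" by (rule J_vert_sub)
  have Jt: "J_edge m ?s \<tau> = poly_deg m" by (rule J_edge_full) simp
  have H0s: "H0_vanishes F m ?s"
    unfolding H0_vanishes_def
  proof (intro allI impI)
    fix d assume "\<forall>\<gamma>\<in>int_vertices F. d \<gamma> \<in> poly_deg m"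
    then obtain w e where "\<forall>\<tau>\<in>int_edges F. w \<tau> \<in> poly_deg m"
      "\<forall>\<gamma>\<in>int_vertices F. e \<gamma> \<in> J_vert F m rr \<gamma> \<and> d \<gamma> = (\<lambda>z. bd1 F w \<gamma> z + e \<gamma> z)"
      using H0 unfolding H0_vanishes_def by blast
    then show "\<exists>w e. (\<forall>\<tau>\<in>int_edges F. w \<tau> \<in> poly_deg m) \<and>
              (\<forall>\<gamma>\<in>int_vertices F. e \<gamma> \<in> J_vert F m ?s \<gamma> \<and>
                   d \<gamma> = (\<lambda>z. bd1 F w \<gamma> z + e \<gamma> z))"
      using J_vert_mono[of F m rr _ \<tau>] by blast
  qed
  have H1s: "H1_vanishes F m ?s"
    unfolding H1_vanishes_def
  proof (intro allI impI)
    fix w assume wa: "(\<forall>\<tau>\<in>int_edges F. w \<tau> \<in> poly_deg m) \<and>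
         (\<forall>\<gamma>\<in>int_vertices F. bd1 F w \<gamma> \<in> J_vert F m ?s \<gamma>)"
    then have wp: "\<forall>\<tau>\<in>int_edges F. w \<tau> \<in> poly_deg m"
      and wb: "\<forall>\<gamma>\<in>int_vertices F. bd1 F w \<gamma> \<in> J_vert F m ?s \<gamma>" by auto
    obtain q where q: "q \<in> poly_deg m"
      "g' \<in> int_vertices F \<longrightarrow> (\<lambda>z. bd1 F w g' z - q z) \<in> J_vert F m rr g'"
    proof (cases "g' \<in> int_vertices F")
      case True
      then have "bd1 F w g' \<in> J_vert F m ?s g'" using wb by blast
      then obtain p where p: "\<forall>t\<in>int_edges F. g' \<in> t \<longrightarrow> p t \<in> J_edge m ?s t"
        and pe: "bd1 F w g' = (\<lambda>z. \<Sum>t\<in>{t\<in>int_edges F. g' \<in> t}. p t z)"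
        unfolding J_vert_def by blast
      have g'in: "g' \<in> \<tau>" using g' by auto
      have pt: "p \<tau> \<in> poly_deg m" using p assms(5) g'in Jt by blast
      let ?p = "p(\<tau> := (\<lambda>z. 0))"
      have "(\<lambda>z. bd1 F w g' z - p \<tau> z) = (\<lambda>z. \<Sum>t\<in>{t\<in>int_edges F. g' \<in> t}. ?p t z)"
      proof (rule ext)
        fix z
        have f2: "finite {t\<in>int_edges F. g' \<in> t}" using fin by auto
        have "(\<Sum>t\<in>{t\<in>int_edges F. g' \<in> t}. ?p t z)
            = (\<Sum>t\<in>{t\<in>int_edges F. g' \<in> t}. p t z - (if t = \<tau> then p \<tau> z else 0))"
          by (intro sum.cong) auto
        also have "\<dots> = bd1 F w g' z - p \<tau> z"
          using f2 assms(5) g'in pe by (simp add: sum_subtractf sum.delta)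
        finally show "bd1 F w g' z - p \<tau> z = (\<Sum>t\<in>{t\<in>int_edges F. g' \<in> t}. ?p t z)" by simp
      qed
      moreover have "\<forall>t\<in>int_edges F. g' \<in> t \<longrightarrow> ?p t \<in> J_edge m rr t"
      proof (intro ballI impI)
        fix t assume t: "t \<in> int_edges F" "g' \<in> t"
        show "?p t \<in> J_edge m rr t"
        proof (cases "t = \<tau>")
          case True then show ?thesis using J_edge_zero by simp
        next
          case False
          then have "J_edge m ?s t = J_edge m rr t" unfolding J_edge_def by simp
          then have "p t \<in> J_edge m rr t" using p t by blast
          then show ?thesis using False by simp
        qed
      qed
      ultimately have "(\<lambda>z. bd1 F w g' z - p \<tau> z) \<in> J_vert F m rr g'"
        unfolding J_vert_def by (intro CollectI exI[of _ ?p] conjI)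
      then show ?thesis using that pt by blast
    next
      case False
      then show ?thesis using that poly_zero by blast
    qed
    define w' where "w' = w(\<tau> := (\<lambda>z. w \<tau> z - c * q z))"
    have w'p: "\<forall>t\<in>int_edges F. w' t \<in> poly_deg m"
      unfolding w'_def using wp q(1) assms(5) by (auto intro: poly_diff poly_smult)
    have w'b: "\<forall>x\<in>int_vertices F. bd1 F w' x \<in> J_vert F m rr x"
    proof
      fix x assume x: "x \<in> int_vertices F"
      show "bd1 F w' x \<in> J_vert F m rr x"
      proof (cases "x \<in> \<tau>")
        case False
        have "bd1 F w' x = bd1 F w x" unfolding w'_def by (rule bd1_upd_other[OF False])
        moreover have "bd1 F w x \<in> J_vert F m ?s x" using wb x by blast
        ultimately show ?thesis using J_vert_same[OF False, of F m rr] by simp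
      next
        case True
        then consider "x = \<gamma>" | "x = g'" using g' by blast
        then show ?thesis
        proof cases
          case 1
          then show ?thesis using bd1_poly[OF w'p] Jg by blast
        next
          case 2
          have "bd1 F w' x = (\<lambda>z. bd1 F w g' z - q z)"
            unfolding w'_def 2 using bd1_upd_in[OF fin assms(5), of g' w c q] g' cc
            by (simp add: c_def)
          then show ?thesis using q(2) x 2 by simp
        qed
      qed
    qed
    obtain u b where ub: "\<forall>\<sigma>\<in>F. u \<sigma> \<in> poly_deg m"
       "\<forall>t\<in>int_edges F. b t \<in> J_edge m rr t \<and> w' t = (\<lambda>z. bd2 F u t z + b t z)"
      using H1 w'p w'b unfolding H1_vanishes_def by blast
    define b' where "b' = b(\<tau> := (\<lambda>z. b \<tau> z + c * q z))"
    have "\<forall>t\<in>int_edges F. b' t \<in> J_edge m ?s t \<and> w t = (\<lambda>z. bd2 F u t z + b' t z)"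
    proof
      fix t assume t: "t \<in> int_edges F"
      show "b' t \<in> J_edge m ?s t \<and> w t = (\<lambda>z. bd2 F u t z + b' t z)"
      proof (cases "t = \<tau>")
        case True
        have bt: "b \<tau> \<in> poly_deg m" using ub(2) t True J_edge_sub by blast
        have e: "w' \<tau> = (\<lambda>z. bd2 F u \<tau> z + b \<tau> z)" using ub(2) t True by blast
        have "w \<tau> = (\<lambda>z. bd2 F u \<tau> z + b' \<tau> z)"
        proof
          fix z
          have "w \<tau> z - c * q z = bd2 F u \<tau> z + b \<tau> z" using fun_cong[OF e, of z]
            by (simp add: w'_def)
          then show "w \<tau> z = bd2 F u \<tau> z + b' \<tau> z" by (simp add: b'_def)
        qed
        moreover have "b' \<tau> \<in> J_edge m ?s \<tau>" unfolding Jt b'_def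
          using bt q(1) by (simp add: poly_add poly_smult)
        ultimately show ?thesis using True by simp
      next
        case False
        then have "J_edge m ?s t = J_edge m rr t" unfolding J_edge_def by simp
        moreover have "b t \<in> J_edge m rr t \<and> w' t = (\<lambda>z. bd2 F u t z + b t z)" using ub(2) t by blast
        moreover have "w' t = w t" "b' t = b t" using False unfolding w'_def b'_def by simp_all
        ultimately show ?thesis by simp
      qed
    qed
    then show "\<exists>u b. (\<forall>\<sigma>\<in>F. u \<sigma> \<in> poly_deg m) \<and>
              (\<forall>\<tau>\<in>int_edges F. b \<tau> \<in> J_edge m ?s \<tau> \<and>
                   w \<tau> = (\<lambda>z. bd2 F u \<tau> z + b \<tau> z))"
      using ub(1) by blast
  qed
  show ?thesis unfolding lower_acyclic_def using H0s H1s by simp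
qed

end
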